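(* For every $n\in\mathbb{N}$, the operator $W_n$ on $H^2$ is not Li-Yorke chaotic.
   Context: $H^2$ denotes the Hardy space of analytic functions $f(z)=\sum_{k\ge0}\hat f(k)z^k$ on the open unit disk with $\sum_{k}|\hat f(k)|^2<\infty$. For $n\in\mathbb{N}$, $W_n$ is the bounded operator on $H^2$ given by $W_nf(z)=(1+z+\cdots+z^{n-1})f(z^n)$ (so $W_1$ is the identity and $W_mW_n=W_{mn}$). An operator $T$ on a Banach space $Y$ is Li-Yorke chaotic if there is an uncountable set $S\subseteq Y$ such that for all distinct $x,y\in S$, $\liminf_{k\to\infty}\|T^kx-T^ky\|=0$ and $\limsup_{k\to\infty}\|T^kx-T^ky\|=\infty$. *)

theory Defs
  imports "HOL-Complex_Analysis.Complex_Analysis"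
begin

definition h2_coeff :: "(complex \<Rightarrow> complex) \<Rightarrow> nat \<Rightarrow> complex" where
  "h2_coeff f k = (deriv ^^ k) f 0 / of_nat (fact k)"

text \<open>The Hardy space H^2: analytic functions on the open unit disk with square-summable
  Taylor coefficients (normalised to be 0 outside the disk, so that each element of H^2
  has exactly one representative).\<close>
definition H2 :: "(complex \<Rightarrow> complex) set" where
  "H2 = {f. f holomorphic_on ball 0 1 \<and> (\<forall>z. z \<notin> ball 0 1 \<longrightarrow> f z = 0)
           \<and> summable (\<lambda>k. (cmod (h2_coeff f k))\<^sup>2)}"

definition h2_norm :: "(complex \<Rightarrow> complex) \<Rightarrow> real" where
  "h2_norm f = sqrt (\<Sum>k. (cmod (h2_coeff f k))\<^sup>2)"

definition W :: "nat \<Rightarrow> (complex \<Rightarrow> complex) \<Rightarrow> (complex \<Rightarrow> complex)" where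
  "W n f = (\<lambda>z. (\<Sum>j<n. z ^ j) * f (z ^ n))"

definition li_yorke_chaotic :: "'a::minus set \<Rightarrow> ('a \<Rightarrow> real) \<Rightarrow> ('a \<Rightarrow> 'a) \<Rightarrow> bool" where
  "li_yorke_chaotic Y nrm T \<longleftrightarrow>
     (\<exists>S. S \<subseteq> Y \<and> uncountable S \<and>
        (\<forall>x\<in>S. \<forall>y\<in>S. x \<noteq> y \<longrightarrow>
           liminf (\<lambda>k. ereal (nrm ((T ^^ k) x - (T ^^ k) y))) = 0 \<and>
           limsup (\<lambda>k. ereal (nrm ((T ^^ k) x - (T ^^ k) y))) = \<infinity>))"

end

theory Submission imports Defs begin


lemma block_sum:
  fixes a :: "nat \<Rightarrow> real"
  shows "(\<Sum>i<N*n. a (i div n)) = of_nat n * (\<Sum>m<N. a m)"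
proof (induction N)
  case 0 then show ?case by simp
next
  case (Suc N)
  have split: "{..<Suc N * n} = {..<N*n} \<union> {N*n..<N*n+n}" by auto
  have "(\<Sum>i\<in>{N*n..<N*n+n}. a (i div n)) = (\<Sum>i\<in>{N*n..<N*n+n}. a N)"
  proof (rule sum.cong)
    fix i assume "i \<in> {N*n..<N*n+n}"
    then have "i div n = N" by (auto intro: div_nat_eqI simp: algebra_simps)
    then show "a (i div n) = a N" by simp
  qed simp
  moreover have "(\<Sum>i<Suc N * n. a (i div n)) = (\<Sum>i<N*n. a (i div n)) + (\<Sum>i\<in>{N*n..<N*n+n}. a (i div n))"
    unfolding split by (rule sum.union_disjoint) auto
  ultimately show ?case using Suc by (simp add: algebra_simps)
qed

lemma div_sums:
  fixes a :: "nat \<Rightarrow> real"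
  assumes n: "n \<ge> 1" and nn: "\<And>m. a m \<ge> 0" and sa: "summable a"
  shows "(\<lambda>i. a (i div n)) sums (of_nat n * suminf a)"
proof -
  have summ: "summable (\<lambda>i. a (i div n))"
  proof (rule summableI_nonneg_bounded)
    fix N
    have "(\<Sum>i<N. a (i div n)) \<le> (\<Sum>i<N*n. a (i div n))"
      using n by (intro sum_mono2) (auto simp: nn)
    also have "\<dots> = of_nat n * (\<Sum>m<N. a m)" by (rule block_sum)
    also have "\<dots> \<le> of_nat n * suminf a"
      using sa nn by (intro mult_left_mono sum_le_suminf) auto
    finally show "(\<Sum>i<N. a (i div n)) \<le> of_nat n * suminf a" .
  qed (simp add: nn)
  have "(\<lambda>m. sum (\<lambda>i. a (i div n)) {m * n ..< m * n + n}) sums (suminf (\<lambda>i. a (i div n)))"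
    using summ n by (intro sums_group) (auto simp: summable_sums)
  moreover have "\<And>m. sum (\<lambda>i. a (i div n)) {m * n ..< m * n + n} = of_nat n * a m"
  proof -
    fix m
    have "sum (\<lambda>i. a (i div n)) {m * n ..< m * n + n} = sum (\<lambda>i. a m) {m * n ..< m * n + n}"
    proof (rule sum.cong)
      fix i assume "i \<in> {m*n..<m*n+n}"
      then have "i div n = m" by (auto intro: div_nat_eqI simp: algebra_simps)
      then show "a (i div n) = a m" by simp
    qed simp
    then show "sum (\<lambda>i. a (i div n)) {m * n ..< m * n + n} = of_nat n * a m" by simp
  qed
  ultimately have "(\<lambda>m. of_nat n * a m) sums (suminf (\<lambda>i. a (i div n)))" by simp
  moreover have "(\<lambda>m. of_nat n * a m) sums (of_nat n * suminf a)"
    using sa by (intro sums_mult) (simp add: summable_sums)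
  ultimately have "suminf (\<lambda>i. a (i div n)) = of_nat n * suminf a" using sums_unique2 by blast
  then show ?thesis using summ by (metis summable_sums)
qed



lemma h2_series:
  assumes "g \<in> H2" "w \<in> ball 0 1"
  shows "(\<lambda>m. h2_coeff g m * w ^ m) sums g w"
proof -
  have "g holomorphic_on ball 0 1" using assms(1) by (simp add: H2_def)
  from holomorphic_power_series[OF this assms(2)]
  show ?thesis by (simp add: h2_coeff_def)
qed

lemma ab_le:
  fixes a b :: real
  assumes "a \<ge> 0" "b \<ge> 0"
  shows "a * b \<le> a\<^sup>2 + b\<^sup>2"
proof -
  have "0 \<le> (a - b)\<^sup>2" by simp
  then have "2 * (a * b) \<le> a\<^sup>2 + b\<^sup>2" by (simp add: power2_diff)
  moreover have "0 \<le> a * b" using assms by simp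
  ultimately show ?thesis by linarith
qed

lemma W_coeff:
  assumes n: "n \<ge> 1" and g: "g \<in> H2"
  shows "h2_coeff (W n g) k = h2_coeff g (k div n)"
proof -
  define c where "c = h2_coeff g"
  define d where "d = (\<lambda>k. c (k div n))"
  have sc: "summable (\<lambda>m. (cmod (c m))\<^sup>2)" using g by (simp add: H2_def c_def)
  have sd: "summable (\<lambda>k. (cmod (d k))\<^sup>2)"
    using div_sums[OF n _ sc] unfolding d_def by (auto simp: sums_iff)
  have "W n g has_fps_expansion Abs_fps d"
  proof (rule has_fps_expansionI)
    have "\<forall>\<^sub>F u in nhds 0. u \<in> ball (0::complex) 1"
      by (intro eventually_nhds_in_open) auto
    then show "\<forall>\<^sub>F u in nhds 0. (\<lambda>k. fps_nth (Abs_fps d) k * u ^ k) sums W n g u"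
    proof eventually_elim
      case (elim u)
      then have u1: "cmod u < 1" by simp
      have un: "u ^ n \<in> ball 0 1"
        using u1 n by (simp add: norm_power power_less_one_iff)
      have sg: "(\<lambda>m. c m * (u^n) ^ m) sums g (u ^ n)"
        using h2_series[OF g un] by (simp add: c_def)
      have "summable (\<lambda>k. norm (d k * u ^ k))"
      proof (rule summable_comparison_test)
        show "summable (\<lambda>k. (cmod (d k))\<^sup>2 + (cmod u ^ 2) ^ k)"
          using sd u1 by (intro summable_add summable_geometric) (auto simp: power_less_one_iff abs_square_less_1)
        show "\<exists>N. \<forall>k\<ge>N. norm (norm (d k * u ^ k)) \<le> (cmod (d k))\<^sup>2 + (cmod u ^ 2) ^ k"
        proof (intro exI allI impI)
          fix k :: nat
          have "cmod (d k) * cmod u ^ k \<le> (cmod (d k))\<^sup>2 + (cmod u ^ k)\<^sup>2"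
            by (rule ab_le) auto
          then show "norm (norm (d k * u ^ k)) \<le> (cmod (d k))\<^sup>2 + (cmod u ^ 2) ^ k"
            by (simp add: norm_mult norm_power power_mult[symmetric] mult.commute power_mult_distrib)
        qed
      qed
      then have summ: "summable (\<lambda>k. d k * u ^ k)" by (rule summable_norm_cancel)
      have "(\<lambda>m. sum (\<lambda>k. d k * u ^ k) {m * n ..< m * n + n}) sums (suminf (\<lambda>k. d k * u ^ k))"
        using summ n by (intro sums_group) (auto simp: summable_sums)
      moreover have "\<And>m. sum (\<lambda>k. d k * u ^ k) {m * n ..< m * n + n} = c m * (u^n)^m * (\<Sum>j<n. u ^ j)"
      proof -
        fix m
        have "sum (\<lambda>k. d k * u ^ k) {m * n ..< m * n + n} = (\<Sum>j<n. d (m*n + j) * u ^ (m*n+j))"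
          by (subst sum.atLeastLessThan_shift_0) (simp add: atLeast0LessThan)
        also have "\<dots> = (\<Sum>j<n. c m * (u^n)^m * u ^ j)"
        proof (rule sum.cong)
          fix j assume "j \<in> {..<n}"
          then have "(m*n + j) div n = m" by (auto intro: div_nat_eqI simp: algebra_simps)
          then show "d (m*n + j) * u ^ (m*n+j) = c m * (u^n)^m * u ^ j"
            by (simp add: d_def power_add power_mult[symmetric] mult.commute)
        qed simp
        finally show "sum (\<lambda>k. d k * u ^ k) {m * n ..< m * n + n} = c m * (u^n)^m * (\<Sum>j<n. u ^ j)"
          by (simp add: sum_distrib_left)
      qed
      ultimately have "(\<lambda>m. c m * (u^n)^m * (\<Sum>j<n. u ^ j)) sums (suminf (\<lambda>k. d k * u ^ k))" by simp
      moreover have "(\<lambda>m. c m * (u^n)^m * (\<Sum>j<n. u ^ j)) sums (g (u^n) * (\<Sum>j<n. u ^ j))"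
        by (rule sums_mult2[OF sg])
      ultimately have "suminf (\<lambda>k. d k * u ^ k) = g (u^n) * (\<Sum>j<n. u ^ j)"
        by (rule sums_unique2)
      then have "suminf (\<lambda>k. d k * u ^ k) = W n g u"
        by (simp add: W_def mult.commute)
      then show ?case using summ summable_sums by fastforce
    qed
  qed
  from fps_nth_fps_expansion[OF this, of k]
  show ?thesis by (simp add: h2_coeff_def d_def c_def)
qed



lemma W_H2_norm:
  assumes n: "n \<ge> 1" and g: "g \<in> H2"
  shows "W n g \<in> H2 \<and> h2_norm (W n g) = sqrt (real n) * h2_norm g"
proof -
  have sc: "summable (\<lambda>m. (cmod (h2_coeff g m))\<^sup>2)" using g by (simp add: H2_def)
  have s: "(\<lambda>k. (cmod (h2_coeff (W n g) k))\<^sup>2) sums (real n * (\<Sum>m. (cmod (h2_coeff g m))\<^sup>2))"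
    using div_sums[OF n _ sc] by (simp add: W_coeff[OF n g])
  have hg: "g holomorphic_on ball 0 1" and zg: "\<And>z. z \<notin> ball 0 1 \<Longrightarrow> g z = 0"
    using g by (auto simp: H2_def)
  have "(\<lambda>z. (\<Sum>j<n. z ^ j) * g (z ^ n)) holomorphic_on ball 0 1"
  proof (intro holomorphic_intros)
    have sub: "(\<lambda>z. z ^ n) ` ball 0 1 \<subseteq> ball (0::complex) 1"
      using n by (auto simp: norm_power power_less_one_iff)
    have hp: "(\<lambda>z. z ^ n) holomorphic_on ball (0::complex) 1" by (intro holomorphic_intros)
    have "(g o (\<lambda>z. z ^ n)) holomorphic_on ball 0 1"
      by (rule holomorphic_on_compose_gen[OF hp hg sub])
    then show "(\<lambda>z. g (z ^ n)) holomorphic_on ball 0 1" by (simp add: o_def)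
  qed
  moreover have "\<forall>z. z \<notin> ball 0 1 \<longrightarrow> W n g z = 0"
  proof (intro allI impI)
    fix z :: complex assume "z \<notin> ball 0 1"
    then have "cmod z \<ge> 1" by simp
    then have "cmod (z ^ n) \<ge> 1" by (simp add: norm_power one_le_power)
    then show "W n g z = 0" using zg by (simp add: W_def)
  qed
  ultimately have "W n g \<in> H2" using s by (auto simp: H2_def W_def sums_iff)
  moreover have "h2_norm (W n g) = sqrt (real n) * h2_norm g"
    using s by (simp add: h2_norm_def sums_iff real_sqrt_mult)
  ultimately show ?thesis by simp
qed

lemma diff_H2:
  assumes f: "f \<in> H2" and g: "g \<in> H2"
  shows "f - g \<in> H2"
proof -
  have hf: "f holomorphic_on ball 0 1" and hg: "g holomorphic_on ball 0 1"
    using f g by (auto simp: H2_def)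
  have c: "h2_coeff (f - g) k = h2_coeff f k - h2_coeff g k" for k
    using higher_deriv_diff[OF hf hg, of 0 k]
    by (simp add: h2_coeff_def fun_diff_def diff_divide_distrib)
  have "summable (\<lambda>k. 2 * (cmod (h2_coeff f k))\<^sup>2 + 2 * (cmod (h2_coeff g k))\<^sup>2)"
    using f g by (intro summable_add summable_mult) (auto simp: H2_def)
  then have "summable (\<lambda>k. (cmod (h2_coeff (f - g) k))\<^sup>2)"
  proof (rule summable_comparison_test[rotated], intro exI allI impI)
    fix k
    have "cmod (h2_coeff f k - h2_coeff g k) \<le> cmod (h2_coeff f k) + cmod (h2_coeff g k)"
      by (rule norm_triangle_ineq4)
    then have "(cmod (h2_coeff f k - h2_coeff g k))\<^sup>2 \<le> (cmod (h2_coeff f k) + cmod (h2_coeff g k))\<^sup>2"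
      by (intro power_mono) auto
    also have "\<dots> \<le> 2 * (cmod (h2_coeff f k))\<^sup>2 + 2 * (cmod (h2_coeff g k))\<^sup>2"
    proof -
      have "0 \<le> (cmod (h2_coeff f k) - cmod (h2_coeff g k))\<^sup>2" by simp
      then show ?thesis by (simp add: power2_sum power2_diff)
    qed
    finally show "norm ((cmod (h2_coeff (f - g) k))\<^sup>2) \<le> 2 * (cmod (h2_coeff f k))\<^sup>2 + 2 * (cmod (h2_coeff g k))\<^sup>2"
      by (simp add: c)
  qed
  moreover have "(f - g) holomorphic_on ball 0 1"
    unfolding fun_diff_def by (rule holomorphic_on_diff[OF hf hg])
  moreover have "\<forall>z. z \<notin> ball 0 1 \<longrightarrow> (f - g) z = 0"
    using f g by (simp add: H2_def)
  ultimately show ?thesis unfolding H2_def by blast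
qed

lemma W_diff: "W n (f - g) = W n f - W n g"
  by (rule ext) (simp add: W_def fun_diff_def algebra_simps)

lemma Wpow_diff: "(W n ^^ k) (f - g) = (W n ^^ k) f - (W n ^^ k) g"
  by (induction k) (simp_all only: funpow.simps o_apply id_apply W_diff)

lemma Wpow_H2_norm:
  assumes n: "n \<ge> 1" and g: "g \<in> H2"
  shows "(W n ^^ k) g \<in> H2 \<and> h2_norm ((W n ^^ k) g) = sqrt (real n) ^ k * h2_norm g"
proof (induction k)
  case 0 then show ?case using g by simp
next
  case (Suc k)
  then show ?case using W_H2_norm[OF n, of "(W n ^^ k) g"] by simp
qed



theorem mainTheorem4:
  fixes n :: nat
  assumes "n \<ge> 1"
  shows "\<not> li_yorke_chaotic H2 h2_norm (W n)"
proof
  assume "li_yorke_chaotic H2 h2_norm (W n)"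
  then obtain S where SH: "S \<subseteq> H2" and unc: "uncountable S" and
    ly: "\<forall>x\<in>S. \<forall>y\<in>S. x \<noteq> y \<longrightarrow>
           liminf (\<lambda>k. ereal (h2_norm ((W n ^^ k) x - (W n ^^ k) y))) = 0 \<and>
           limsup (\<lambda>k. ereal (h2_norm ((W n ^^ k) x - (W n ^^ k) y))) = \<infinity>"
    unfolding li_yorke_chaotic_def by blast
  obtain x y where xy: "x \<in> S" "y \<in> S" "x \<noteq> y"
  proof -
    have "\<not> S \<subseteq> {}" using unc by auto
    then obtain x where x: "x \<in> S" by auto
    have "\<not> S \<subseteq> {x}" using unc countable_subset[of S "{x}"] by auto
    then obtain y where "y \<in> S" "y \<noteq> x" by auto
    then show ?thesis using that x by blast
  qed
  define r where "r = h2_norm (x - y)"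
  have gH: "x - y \<in> H2" using diff_H2 xy SH by auto
  have eq: "(\<lambda>k. ereal (h2_norm ((W n ^^ k) x - (W n ^^ k) y))) = (\<lambda>k. ereal (sqrt (real n) ^ k * r))"
    using Wpow_H2_norm[OF assms gH] by (simp add: Wpow_diff[symmetric] r_def)
  have r0: "r \<ge> 0" using gH by (simp add: r_def h2_norm_def H2_def suminf_nonneg)
  show False
  proof (cases "r = 0")
    case True
    then have "limsup (\<lambda>k. ereal (h2_norm ((W n ^^ k) x - (W n ^^ k) y))) = 0"
      using eq by (simp add: Limsup_const zero_ereal_def)
    then show False using ly xy by auto
  next
    case False
    have "\<And>k. r \<le> sqrt (real n) ^ k * r"
      using assms r0 by (simp add: one_le_power mult_le_cancel_right1)
    then have "ereal r \<le> liminf (\<lambda>k. ereal (sqrt (real n) ^ k * r))"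
      by (intro Liminf_bounded) auto
    moreover have "liminf (\<lambda>k. ereal (h2_norm ((W n ^^ k) x - (W n ^^ k) y))) = 0"
      using ly[rule_format, OF xy] by (rule conjunct1)
    then have "liminf (\<lambda>k. ereal (sqrt (real n) ^ k * r)) = 0"
      by (simp only: eq)
    ultimately have "ereal r \<le> 0" by (rule ord_le_eq_trans)
    then have "r \<le> 0" by (simp add: zero_ereal_def)
    then show False using False r0 by linarith
  qed
qed

end
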